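(* Let $k$ be a positive integer and let $m>0$. Let $G$ be a bipartite graph with parts $A$ and $B$ that does not contain $K_{k,k}$ as a subgraph, and assume that $d_G(u)\leq m$ for all $u\in A$. Then $G$ has a spanning subgraph $G'$ such that $e(G')\geq e(G)/(k+1)$ and $d_{G'}(u,u')\leq k\,m^{1-1/k}$ for any two distinct $u,u'\in A$.
   Context: $d_G(u)$ is the degree of $u$ in $G$; $d_G(u,u')$ is the number of common neighbours of $u$ and $u'$ in $G$ (the codegree). *)

theory Defs
  imports Complex_Main
begin

(* A bipartite graph with parts A and B is represented by its edge set
   E \<subseteq> A \<times> B: the pair (a,b) stands for the edge {a,b}. *)
definition bipartite_graph :: "'a set \<Rightarrow> 'a set \<Rightarrow> ('a \<times> 'a) set \<Rightarrow> bool" where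
  "bipartite_graph A B E \<longleftrightarrow> finite A \<and> finite B \<and> A \<inter> B = {} \<and> E \<subseteq> A \<times> B"

definition degA :: "('a \<times> 'a) set \<Rightarrow> 'a \<Rightarrow> nat" where
  "degA E u = card {b. (u, b) \<in> E}"

definition codegA :: "('a \<times> 'a) set \<Rightarrow> 'a \<Rightarrow> 'a \<Rightarrow> nat" where
  "codegA E u u' = card {b. (u, b) \<in> E \<and> (u', b) \<in> E}"

(* G contains K_{k,k} as a subgraph (for bipartite G the two sides of a
   K_{k,k} copy lie in A and B respectively, up to swapping which is symmetric) *)
definition contains_Kkk :: "'a set \<Rightarrow> 'a set \<Rightarrow> ('a \<times> 'a) set \<Rightarrow> nat \<Rightarrow> bool" where
  "contains_Kkk A B E k \<longleftrightarrow>
     (\<exists>S T. S \<subseteq> A \<and> T \<subseteq> B \<and> card S = k \<and> card T = k \<and> S \<times> T \<subseteq> E)"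

end

theory Submission
  imports Defs
begin


lemma caro_wei:
  fixes adj :: "'b \<Rightarrow> 'b \<Rightarrow> bool"
  assumes sym: "\<And>x y. adj x y \<Longrightarrow> adj y x" and irr: "\<And>x. \<not> adj x x"
  shows "finite V \<Longrightarrow> \<exists>I\<subseteq>V. (\<forall>x\<in>I. \<forall>y\<in>I. \<not> adj x y) \<and>
     (\<Sum>x\<in>V. 1 / (real (card {y\<in>V. adj x y}) + 1)) \<le> real (card I)"
proof (induction "card V" arbitrary: V rule: less_induct)
  case less
  show ?case
  proof (cases "V = {}")
    case True then show ?thesis by auto
  next
    case False
    define dg where "dg x = card {y\<in>V. adj x y}" for x
    obtain v where v: "v \<in> V" "\<And>w. w \<in> V \<Longrightarrow> dg v \<le> dg w"
    proof -
      have "Min (dg ` V) \<in> dg ` V" using less.prems False by simp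
      then obtain v where "v \<in> V" "dg v = Min (dg ` V)" by auto
      then show ?thesis using that less.prems by auto
    qed
    define N where "N = {y\<in>V. adj v y}"
    define V' where "V' = V - insert v N"
    have fin': "finite V'" using less.prems by (simp add: V'_def)
    have "card V' < card V" unfolding V'_def using v(1) less.prems
      by (intro psubset_card_mono) auto
    from less.hyps[OF this fin'] obtain I' where I': "I' \<subseteq> V'"
      "\<forall>x\<in>I'. \<forall>y\<in>I'. \<not> adj x y"
      "(\<Sum>x\<in>V'. 1 / (real (card {y\<in>V'. adj x y}) + 1)) \<le> real (card I')" by blast
    have vI': "v \<notin> I'" using I'(1) by (auto simp: V'_def)
    have indep: "\<forall>x\<in>insert v I'. \<forall>y\<in>insert v I'. \<not> adj x y"
      using I' irr sym by (auto simp: V'_def N_def)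
    have finN: "finite N" using less.prems by (simp add: N_def)
    have vN: "v \<notin> N" using irr by (simp add: N_def)
    have cardvN: "card (insert v N) = dg v + 1"
      using finN vN by (simp add: dg_def N_def)
    have split: "V = V' \<union> insert v N" "V' \<inter> insert v N = {}"
      using v(1) by (auto simp: V'_def N_def)
    have s1: "(\<Sum>x\<in>V'. 1 / (real (dg x) + 1)) \<le> (\<Sum>x\<in>V'. 1 / (real (card {y\<in>V'. adj x y}) + 1))"
    proof (rule sum_mono)
      fix x assume "x \<in> V'"
      have "card {y\<in>V'. adj x y} \<le> dg x" unfolding dg_def
        by (rule card_mono) (use less.prems in \<open>auto simp: V'_def\<close>)
      then show "1 / (real (dg x) + 1) \<le> 1 / (real (card {y\<in>V'. adj x y}) + 1)"
        by (simp add: frac_le)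
    qed
    have s2: "(\<Sum>x\<in>insert v N. 1 / (real (dg x) + 1)) \<le> (\<Sum>x\<in>insert v N. 1 / (real (dg v) + 1))"
    proof (rule sum_mono)
      fix x assume "x \<in> insert v N"
      then have "x \<in> V" using v(1) by (auto simp: N_def)
      then show "1 / (real (dg x) + 1) \<le> 1 / (real (dg v) + 1)"
        using v(2) by (simp add: frac_le)
    qed
    have s3: "(\<Sum>x\<in>insert v N. 1 / (real (dg v) + 1)) = 1"
      using cardvN by simp
    have "(\<Sum>x\<in>V. 1 / (real (dg x) + 1)) = (\<Sum>x\<in>V'. 1 / (real (dg x) + 1)) + (\<Sum>x\<in>insert v N. 1 / (real (dg x) + 1))"
      using split fin' finN by (metis finite_insert sum.union_disjoint)
    also have "\<dots> \<le> real (card I') + 1" using s1 s2 s3 I'(3) by linarith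
    also have "\<dots> = real (card (insert v I'))"
      using vI' finite_subset[OF I'(1) fin'] by simp
    finally show ?thesis using indep I'(1) v(1) by (intro exI[of _ "insert v I'"]) (auto simp: dg_def V'_def)
  qed
qed



lemma choose_lower:
  "(max 0 (real r - real n + 1)) ^ n \<le> fact n * real (r choose n)"
proof (induction n arbitrary: r)
  case 0 then show ?case by simp
next
  case (Suc n)
  show ?case
  proof (cases r)
    case 0 then show ?thesis by simp
  next
    case (Suc r')
    have eq: "fact (Suc n) * real (Suc r' choose Suc n) = real (Suc r') * (fact n * real (r' choose n))"
    proof -
      have "real (Suc n) * real (Suc r' choose Suc n) = real (Suc r') * real (r' choose n)"
        using Suc_times_binomial[of n r'] by (metis of_nat_mult)
      moreover have "fact (Suc n) * real (Suc r' choose Suc n) = fact n * (real (Suc n) * real (Suc r' choose Suc n))"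
        by (metis fact_Suc mult.assoc mult.commute)
      ultimately show ?thesis by (simp only: mult.left_commute)
    qed
    have ih: "(max 0 (real r' - real n + 1)) ^ n \<le> fact n * real (r' choose n)" by (rule Suc.IH)
    have m: "max 0 (real (Suc r') - real (Suc n) + 1) = max 0 (real r' - real n + 1)" by simp
    have "(max 0 (real r' - real n + 1)) ^ Suc n = max 0 (real r' - real n + 1) * (max 0 (real r' - real n + 1)) ^ n"
      by simp
    also have "\<dots> \<le> real (Suc r') * (fact n * real (r' choose n))"
      by (rule mult_mono) (use ih in auto)
    finally have X: "(max 0 (real r' - real n + 1)) ^ Suc n \<le> real (Suc r') * (fact n * real (r' choose n))" .
    show ?thesis unfolding Suc m eq by (rule X)
  qed
qed

lemma choose_upper:
  "fact n * real (p choose n) \<le> real p ^ n"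
proof (induction n arbitrary: p)
  case 0 then show ?case by simp
next
  case (Suc n)
  show ?case
  proof (cases p)
    case 0 then show ?thesis by simp
  next
    case (Suc p')
    have eq: "fact (Suc n) * real (Suc p' choose Suc n) = real (Suc p') * (fact n * real (p' choose n))"
    proof -
      have "real (Suc n) * real (Suc p' choose Suc n) = real (Suc p') * real (p' choose n)"
        using Suc_times_binomial[of n p'] by (metis of_nat_mult)
      moreover have "fact (Suc n) * real (Suc p' choose Suc n) = fact n * (real (Suc n) * real (Suc p' choose Suc n))"
        by (metis fact_Suc mult.assoc mult.commute)
      ultimately show ?thesis by (simp only: mult.left_commute)
    qed
    have "real (Suc p') * (fact n * real (p' choose n)) \<le> real (Suc p') * real p' ^ n"
      using Suc.IH[of p'] by (intro mult_left_mono) auto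
    also have "\<dots> \<le> real (Suc p') * real (Suc p') ^ n"
      by (intro mult_left_mono power_mono) auto
    finally have X: "real (Suc p') * (fact n * real (p' choose n)) \<le> real (Suc p') ^ Suc n" by simp
    show ?thesis unfolding Suc eq by (rule X)
  qed
qed

lemma power_tangent:
  fixes z a :: real
  assumes "z \<ge> 0" "a > 0"
  shows "a ^ n + real n * a ^ (n - 1) * (z - a) \<le> z ^ n"
proof (cases n)
  case 0 then show ?thesis by simp
next
  case (Suc n')
  have "1 + real n * (z / a - 1) \<le> (1 + (z / a - 1)) ^ n"
    by (rule Bernoulli_inequality) (use assms in simp)
  then have "a ^ n * (1 + real n * (z / a - 1)) \<le> a ^ n * (z / a) ^ n"
    by (intro mult_left_mono) (use assms in auto)
  also have "\<dots> = z ^ n" using assms by (simp add: power_divide)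
  also have "a ^ n * (1 + real n * (z / a - 1)) = a ^ n + real n * a ^ (n - 1) * (z - a)"
    using assms Suc by (simp add: field_simps)
  finally show ?thesis .
qed

lemma power_mean:
  fixes z :: "'b \<Rightarrow> real"
  assumes "finite D" "D \<noteq> {}" "\<And>b. b \<in> D \<Longrightarrow> z b \<ge> 0" "sum z D > 0"
  shows "real (card D) * (sum z D / real (card D)) ^ n \<le> (\<Sum>b\<in>D. z b ^ n)"
proof -
  define a where "a = sum z D / real (card D)"
  have cD: "real (card D) > 0" using assms by auto
  have a: "a > 0" using assms cD by (simp add: a_def)
  have "(\<Sum>b\<in>D. a ^ n + real n * a ^ (n - 1) * (z b - a)) \<le> (\<Sum>b\<in>D. z b ^ n)"
    by (rule sum_mono, rule power_tangent) (use assms a in auto)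
  moreover have "(\<Sum>b\<in>D. a ^ n + real n * a ^ (n - 1) * (z b - a)) = real (card D) * a ^ n"
  proof -
    have "(\<Sum>b\<in>D. a ^ n + real n * a ^ (n - 1) * (z b - a)) = real (card D) * a ^ n + real n * a ^ (n - 1) * (sum z D - real (card D) * a)"
      by (simp add: sum.distrib sum_distrib_left[symmetric] sum_distrib_right[symmetric] sum_subtractf algebra_simps)
    also have "sum z D - real (card D) * a = 0" using cD by (simp add: a_def)
    finally show ?thesis by simp
  qed
  ultimately show ?thesis by (simp add: a_def)
qed



lemma key_ineq:
  fixes r :: "'b \<Rightarrow> nat" and D :: "'b set" and p k :: nat and m :: real
  assumes D: "finite D" and k: "k \<ge> 2" and m1: "m \<ge> 1"
    and dm: "real (card D) \<le> m"
    and count: "(\<Sum>b\<in>D. real (r b choose (k - 1))) \<le> real (k - 1) * real (p choose (k - 1))"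
    and RpT: "real p * (real k * m powr (1 - 1 / real k)) \<le> (\<Sum>b\<in>D. real (r b))"
  shows "(\<Sum>b\<in>D. real (r b)) \<le> real k * real (card D)"
proof (rule ccontr)
  define n where "n = k - 1"
  have kn: "k = Suc n" and n1: "n \<ge> 1" using k by (auto simp: n_def)
  define R where "R = (\<Sum>b\<in>D. real (r b))"
  define d where "d = real (card D)"
  define M where "M = m powr (1 - 1 / real k)"
  assume "\<not> (\<Sum>b\<in>D. real (r b)) \<le> real k * real (card D)"
  then have Rbig: "R > real k * d" unfolding R_def d_def by (simp add: not_le)
  have d0: "d \<ge> 0" by (simp add: d_def)
  have Rpos: "R > 0" using Rbig d0 k by (smt (verit) mult_nonneg_nonneg of_nat_0_le_iff)
  have Dne: "D \<noteq> {}" using Rpos by (auto simp: R_def)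
  have dpos: "d > 0" using Dne D by (simp add: d_def card_gt_0_iff)
  define z where "z b = max 0 (real (r b) - real n + 1)" for b
  define Z where "Z = sum z D"
  have "(\<Sum>b\<in>D. real (r b) - real n + 1) \<le> Z"
    unfolding Z_def z_def by (rule sum_mono) simp
  then have Zge: "Z \<ge> R - (real n - 1) * d"
    by (simp add: sum_subtractf sum.distrib R_def d_def algebra_simps)
  have "R - (real n - 1) * d \<ge> 2 * R / real k"
  proof -
    have "real k * (R - (real n - 1) * d) - 2 * R = (real n - 1) * (R - real k * d)"
      by (simp add: kn algebra_simps)
    moreover have "(real n - 1) * (R - real k * d) \<ge> 0" using n1 Rbig by simp
    ultimately have "real k * (R - (real n - 1) * d) \<ge> 2 * R" by linarith
    then show ?thesis using k by (simp add: field_simps)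
  qed
  with Zge have Z2: "Z \<ge> 2 * R / real k" by linarith
  have Mpos: "M > 0" using m1 by (simp add: M_def)
  have Rge: "R \<ge> real p * real k * M" using RpT by (simp add: R_def M_def mult.assoc)
  have ZM: "Z \<ge> 2 * real p * M"
  proof -
    have "2 * R / real k \<ge> 2 * (real p * real k * M) / real k"
      using Rge k by (intro divide_right_mono) auto
    then show ?thesis using Z2 k by simp
  qed
  have "2 * R / real k > 0" using Rpos k by simp
  then have Zpos: "Z > 0" using Z2 by linarith
  have pm: "d * (Z / d) ^ n \<le> (\<Sum>b\<in>D. z b ^ n)"
    using power_mean[of D z n] D Dne Zpos by (simp add: Z_def d_def z_def)
  also have "\<dots> \<le> (\<Sum>b\<in>D. fact n * real (r b choose n))"
    by (rule sum_mono) (simp add: z_def choose_lower)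
  also have "\<dots> = fact n * (\<Sum>b\<in>D. real (r b choose n))" by (simp add: sum_distrib_left)
  also have "\<dots> \<le> fact n * (real n * real (p choose n))"
    using count by (intro mult_left_mono) (auto simp: n_def)
  also have "\<dots> = real n * (fact n * real (p choose n))" by simp
  also have "\<dots> \<le> real n * real p ^ n"
    by (intro mult_left_mono choose_upper) auto
  finally have main: "d * (Z / d) ^ n \<le> real n * real p ^ n" .
  have ppos: "p > 0"
  proof (rule ccontr)
    assume "\<not> p > 0" then have "p = 0" by simp
    then have "real n * real p ^ n = 0" using n1 by simp
    moreover have "d * (Z / d) ^ n > 0" using dpos Zpos by simp
    ultimately show False using main by linarith
  qed
  have "d * (2 * real p * M / d) ^ n \<le> d * (Z / d) ^ n"
    using ZM dpos Mpos by (intro mult_left_mono power_mono divide_right_mono) auto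
  with main have A: "d * (2 * real p * M / d) ^ n \<le> real n * real p ^ n" by linarith
  have dd: "d ^ n = d * d ^ (n - 1)" using n1 by (cases n) auto
  have "d * (2 * real p * M / d) ^ n = (2 * real p * M) ^ n / d ^ (n - 1)"
    using dpos by (simp add: power_divide dd)
  also have "(2 * real p * M) ^ n = 2 ^ n * real p ^ n * M ^ n" by (simp add: power_mult_distrib)
  finally have "2 ^ n * real p ^ n * M ^ n / d ^ (n - 1) \<le> real n * real p ^ n" using A by simp
  then have B: "2 ^ n * real p ^ n * M ^ n \<le> real n * real p ^ n * d ^ (n - 1)"
    using dpos by (simp add: pos_divide_le_eq)
  have dn: "d ^ (n - 1) \<le> m ^ (n - 1)" using dm d0 by (intro power_mono) (auto simp: d_def)
  have Mn: "M ^ n \<ge> m ^ (n - 1)"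
  proof -
    have "M ^ n = m powr (real n * (1 - 1 / real k))" using m1 by (simp add: M_def powr_power)
    also have "\<dots> \<ge> m powr real (n - 1)"
      using m1 n1 by (intro powr_mono) (auto simp: kn field_simps of_nat_diff)
    finally show ?thesis using m1 by (simp add: powr_realpow)
  qed
  have pn: "real p ^ n > 0" using ppos by simp
  have "2 ^ n * real p ^ n * m ^ (n - 1) \<le> 2 ^ n * real p ^ n * M ^ n"
    using Mn pn by simp
  also have "\<dots> \<le> real n * real p ^ n * d ^ (n - 1)" by (rule B)
  also have "\<dots> \<le> real n * real p ^ n * m ^ (n - 1)" using dn pn by (intro mult_left_mono) auto
  finally have "2 ^ n * (real p ^ n * m ^ (n - 1)) \<le> real n * (real p ^ n * m ^ (n - 1))"
    by (simp add: mult.assoc)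
  moreover have "real p ^ n * m ^ (n - 1) > 0" using pn m1 by simp
  ultimately have "(2::real) ^ n \<le> real n" by (rule mult_right_le_imp_le)
  then have "(2::nat) ^ n \<le> n" by (metis of_nat_le_iff of_nat_numeral of_nat_power)
  with less_exp[of n] show False by linarith
qed



lemma dc:
  assumes "finite X" "finite Y"
  shows "(\<Sum>x\<in>X. card {y\<in>Y. Rel x y}) = (\<Sum>y\<in>Y. card {x\<in>X. Rel x y})"
proof -
  have c1: "card {y\<in>Y. Rel x y} = (\<Sum>y\<in>Y. if Rel x y then 1 else 0)" for x
    using assms(2) sum.inter_filter[of Y "\<lambda>_. 1::nat" "Rel x"] by simp
  have c2: "card {x\<in>X. Rel x y} = (\<Sum>x\<in>X. if Rel x y then 1 else 0)" for y
    using assms(1) sum.inter_filter[of X "\<lambda>_. 1::nat" "\<lambda>x. Rel x y"] by simp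
  have "(\<Sum>x\<in>X. card {y\<in>Y. Rel x y}) = (\<Sum>x\<in>X. \<Sum>y\<in>Y. if Rel x y then 1 else 0)"
    by (simp only: c1)
  also have "\<dots> = (\<Sum>y\<in>Y. \<Sum>x\<in>X. if Rel x y then 1 else 0)" by (rule sum.swap)
  also have "\<dots> = (\<Sum>y\<in>Y. card {x\<in>X. Rel x y})"
    by (simp only: c2)
  finally show ?thesis .
qed

lemma recip_tangent:
  fixes t a :: real assumes "t > 0" "a > 0"
  shows "(2 * a - t) / a ^ 2 \<le> 1 / t"
proof -
  have e: "(a - t) ^ 2 = a ^ 2 - (2 * a - t) * t" by (simp add: power2_eq_square algebra_simps)
  have "(2 * a - t) * t \<le> a ^ 2" using zero_le_power2[of "a - t"] e by linarith
  then show ?thesis using assms by (simp add: divide_le_eq le_divide_eq)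
qed

lemma per_vertex:
  fixes A B :: "'a set" and E :: "('a \<times> 'a) set" and k :: nat and m T :: real
  assumes bip: "bipartite_graph A B E" and noK: "\<not> contains_Kkk A B E k"
    and k2: "k \<ge> 2" and m1: "m \<ge> 1" and T: "T = real k * m powr (1 - 1 / real k)"
    and u: "u \<in> A" and deg: "real (degA E u) \<le> m"
  defines "P \<equiv> {u'\<in>A. u' \<noteq> u \<and> real (codegA E u u') > T}"
  shows "(\<Sum>b\<in>{b. (u, b) \<in> E}. real (card {u'\<in>P. (u', b) \<in> E})) \<le> real k * real (card {b. (u, b) \<in> E})"
proof -
  define D where "D = {b. (u, b) \<in> E}"
  define n where "n = k - 1"
  have kn: "k = Suc n" using k2 by (simp add: n_def)
  have finA: "finite A" and finB: "finite B" and EAB: "E \<subseteq> A \<times> B" using bip by (auto simp: bipartite_graph_def)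
  have DB: "D \<subseteq> B" using EAB by (auto simp: D_def)
  have finD: "finite D" using finite_subset[OF DB finB] .
  have finP: "finite P" using finA by (simp add: P_def)
  define Pb where "Pb b = {u'\<in>P. (u', b) \<in> E}" for b
  define QQ where "QQ = {Q. Q \<subseteq> P \<and> card Q = n}"
  have finQQ: "finite QQ" unfolding QQ_def using finP
    by (rule finite_subset[rotated, OF finite_Collect_subsets]) auto
  have cardQQ: "card QQ = card P choose n" unfolding QQ_def by (rule n_subsets[OF finP])
  have "(\<Sum>b\<in>D. card {Q. Q \<subseteq> Pb b \<and> card Q = n}) = (\<Sum>b\<in>D. card {Q\<in>QQ. Q \<subseteq> Pb b})"
    by (rule sum.cong[OF refl], rule arg_cong[where f=card]) (auto simp: QQ_def Pb_def)
  also have "\<dots> = (\<Sum>Q\<in>QQ. card {b\<in>D. Q \<subseteq> Pb b})" by (rule dc[OF finD finQQ])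
  also have "\<dots> \<le> (\<Sum>Q\<in>QQ. n)"
  proof (rule sum_mono)
    fix Q assume Q: "Q \<in> QQ"
    show "card {b\<in>D. Q \<subseteq> Pb b} \<le> n"
    proof (rule ccontr)
      assume "\<not> card {b\<in>D. Q \<subseteq> Pb b} \<le> n"
      then have "k \<le> card {b\<in>D. Q \<subseteq> Pb b}" using kn by simp
      moreover have "finite {b\<in>D. Q \<subseteq> Pb b}" using finD by simp
      ultimately obtain T' where T': "T' \<subseteq> {b\<in>D. Q \<subseteq> Pb b}" "card T' = k"
        using obtain_subset_with_card_n by metis
      have QP: "Q \<subseteq> P" "card Q = n" using Q by (auto simp: QQ_def)
      have uQ: "u \<notin> Q" using QP by (auto simp: P_def)
      have finQ: "finite Q" using finite_subset[OF QP(1) finP] .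
      have "contains_Kkk A B E k" unfolding contains_Kkk_def
      proof (intro exI conjI)
        show "insert u Q \<subseteq> A" using QP u by (auto simp: P_def)
        show "T' \<subseteq> B" using T' DB by auto
        show "card (insert u Q) = k" using uQ finQ QP kn by simp
        show "card T' = k" by (rule T'(2))
        show "insert u Q \<times> T' \<subseteq> E"
          using T' by (auto simp: D_def Pb_def)
      qed
      with noK show False by simp
    qed
  qed
  also have "\<dots> = n * (card P choose n)" using cardQQ by simp
  finally have cnt: "(\<Sum>b\<in>D. card {Q. Q \<subseteq> Pb b \<and> card Q = n}) \<le> n * (card P choose n)" .
  have "(\<Sum>b\<in>D. card {Q. Q \<subseteq> Pb b \<and> card Q = n}) = (\<Sum>b\<in>D. card (Pb b) choose n)"
    by (rule sum.cong[OF refl], rule n_subsets) (simp add: Pb_def finP)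
  with cnt have c3: "(\<Sum>b\<in>D. card (Pb b) choose n) \<le> n * (card P choose n)" by simp
  then have "real (\<Sum>b\<in>D. card (Pb b) choose n) \<le> real (n * (card P choose n))"
    by (simp only: of_nat_le_iff)
  then have cnt2: "(\<Sum>b\<in>D. real (card (Pb b) choose n)) \<le> real n * real (card P choose n)"
    by (simp only: of_nat_sum of_nat_mult)
  have "(\<Sum>b\<in>D. card (Pb b)) = (\<Sum>b\<in>D. card {u'\<in>P. (u', b) \<in> E})" by (simp add: Pb_def)
  also have "\<dots> = (\<Sum>u'\<in>P. card {b\<in>D. (u', b) \<in> E})" by (rule dc[OF finD finP])
  also have "\<dots> = (\<Sum>u'\<in>P. codegA E u u')"
    by (rule sum.cong) (auto simp: codegA_def D_def)
  finally have Req: "real (\<Sum>b\<in>D. card (Pb b)) = (\<Sum>u'\<in>P. real (codegA E u u'))" by simp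
  have "(\<Sum>u'\<in>P. T) \<le> (\<Sum>u'\<in>P. real (codegA E u u'))"
    by (rule sum_mono) (auto simp: P_def)
  then have RpT: "real (card P) * (real k * m powr (1 - 1 / real k)) \<le> (\<Sum>b\<in>D. real (card (Pb b)))"
    using Req T by simp
  have dm: "real (card D) \<le> m" using deg by (simp add: degA_def D_def)
  have "(\<Sum>b\<in>D. real (card (Pb b))) \<le> real k * real (card D)"
    by (rule key_ineq[OF finD k2 m1 dm _ RpT]) (use cnt2 in \<open>simp add: n_def\<close>)
  then show ?thesis by (simp add: D_def Pb_def)
qed

theorem lemma3p2:
  fixes A B :: "'a set" and E :: "('a \<times> 'a) set" and k :: nat and m :: real
  assumes "k > 0" and "m > 0"
    and "bipartite_graph A B E"
    and "\<not> contains_Kkk A B E k"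
    and "\<forall>u\<in>A. real (degA E u) \<le> m"
  shows "\<exists>E'. E' \<subseteq> E \<and> real (card E') \<ge> real (card E) / real (k + 1) \<and>
           (\<forall>u\<in>A. \<forall>u'\<in>A. u \<noteq> u' \<longrightarrow>
              real (codegA E' u u') \<le> real k * m powr (1 - 1 / real k))"
proof -
  note k0 = assms(1) and m0 = assms(2) and bip = assms(3) and noK = assms(4) and deg = assms(5)
  define T where "T = real k * m powr (1 - 1 / real k)"
  have T0: "T \<ge> 0" using m0 by (simp add: T_def)
  have finA: "finite A" and finB: "finite B" and EAB: "E \<subseteq> A \<times> B"
    using bip by (auto simp: bipartite_graph_def)
  have finE: "finite E" using finite_subset[OF EAB] finA finB by blast
  show ?thesis
  proof (cases "E = {}")
    case True
    then show ?thesis using T0 by (auto simp: codegA_def T_def)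
  next
    case False
    then obtain u0 b0 where ub0: "(u0, b0) \<in> E" by auto
    have u0A: "u0 \<in> A" and b0B: "b0 \<in> B" using ub0 EAB by auto
    have k2: "k \<ge> 2"
    proof (rule ccontr)
      assume "\<not> k \<ge> 2" then have k1: "k = 1" using k0 by simp
      have "contains_Kkk A B E k" unfolding contains_Kkk_def k1
        using u0A b0B ub0 by (intro exI[of _ "{u0}"] exI[of _ "{b0}"]) auto
      with noK show False by simp
    qed
    have m1: "m \<ge> 1"
    proof -
      have "finite {b. (u0, b) \<in> E}" using finite_subset[of "{b. (u0, b) \<in> E}" B] EAB finB by auto
      then have "card {b. (u0, b) \<in> E} \<ge> 1" using ub0 by (metis (mono_tags) One_nat_def Suc_leI card_gt_0_iff empty_iff mem_Collect_eq)
      then have c1: "real (card {b. (u0, b) \<in> E}) \<ge> 1" by simp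
      have "real (card {b. (u0, b) \<in> E}) \<le> m" using deg u0A by (simp add: degA_def)
      then show ?thesis using c1 by linarith
    qed
    define heavy where "heavy u u' \<longleftrightarrow> u \<noteq> u' \<and> real (codegA E u u') > T" for u u'
    have hsym: "heavy u u' \<Longrightarrow> heavy u' u" for u u'
      by (auto simp: heavy_def codegA_def conj_commute)
    define adj where "adj x y \<longleftrightarrow> snd x = snd y \<and> heavy (fst x) (fst y)" for x y :: "'a \<times> 'a"
    have asym: "adj x y \<Longrightarrow> adj y x" for x y using hsym by (auto simp: adj_def)
    have airr: "\<not> adj x x" for x by (auto simp: adj_def heavy_def)
    obtain I where I: "I \<subseteq> E" "\<forall>x\<in>I. \<forall>y\<in>I. \<not> adj x y"
      "(\<Sum>x\<in>E. 1 / (real (card {y\<in>E. adj x y}) + 1)) \<le> real (card I)"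
      using caro_wei[of adj E, OF asym airr finE] by blast
    define r where "r x = card {y\<in>E. adj x y}" for x
    define N where "N u = {b. (u, b) \<in> E}" for u
    have finN: "finite (N u)" for u using finite_subset[of "N u" B] EAB finB by (auto simp: N_def)
    have ESig: "E = Sigma A N" using EAB by (auto simp: N_def)
    have rsum: "(\<Sum>x\<in>E. real (r x)) \<le> real k * real (card E)"
    proof -
      have "(\<Sum>x\<in>E. real (r x)) = (\<Sum>u\<in>A. \<Sum>b\<in>N u. real (r (u, b)))"
        unfolding ESig using finA finN by (subst sum.Sigma) auto
      also have "\<dots> \<le> (\<Sum>u\<in>A. real k * real (card (N u)))"
      proof (rule sum_mono)
        fix u assume u: "u \<in> A"
        define P where "P = {u'\<in>A. u' \<noteq> u \<and> real (codegA E u u') > T}"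
        have rr: "r (u, b) = card {u'\<in>P. (u', b) \<in> E}" for b
        proof -
          have "{y\<in>E. adj (u, b) y} = (\<lambda>u'. (u', b)) ` {u'\<in>P. (u', b) \<in> E}"
            using EAB by (auto simp: adj_def heavy_def P_def)
          moreover have "inj_on (\<lambda>u'. (u', b)) {u'\<in>P. (u', b) \<in> E}" by (auto intro: inj_onI)
          ultimately show ?thesis by (simp add: r_def card_image)
        qed
        have "(\<Sum>b\<in>{b. (u, b) \<in> E}. real (card {u'\<in>P. (u', b) \<in> E})) \<le> real k * real (card {b. (u, b) \<in> E})"
          unfolding P_def
          by (rule per_vertex[OF bip noK k2 m1 T_def u]) (use deg u in auto)
        then show "(\<Sum>b\<in>N u. real (r (u, b))) \<le> real k * real (card (N u))"
          by (simp add: rr N_def)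
      qed
      also have "\<dots> = real k * real (card E)"
        unfolding ESig using finA finN by (simp add: card_SigmaI sum_distrib_left)
      finally show ?thesis .
    qed
    have a0: "real (k + 1) > 0" by simp
    have "(\<Sum>x\<in>E. (2 * real (k + 1) - (real (r x) + 1)) / real (k + 1) ^ 2) \<le> (\<Sum>x\<in>E. 1 / (real (r x) + 1))"
      by (rule sum_mono, rule recip_tangent) auto
    moreover have "(\<Sum>x\<in>E. (2 * real (k + 1) - (real (r x) + 1)) / real (k + 1) ^ 2)
        = ((2 * real (k + 1) - 1) * real (card E) - (\<Sum>x\<in>E. real (r x))) / real (k + 1) ^ 2"
      by (simp add: sum_divide_distrib[symmetric] sum_subtractf sum.distrib algebra_simps)
    moreover have "((2 * real (k + 1) - 1) * real (card E) - (\<Sum>x\<in>E. real (r x))) / real (k + 1) ^ 2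
        \<ge> real (card E) / real (k + 1)"
    proof -
      have "(2 * real (k + 1) - 1) * real (card E) - (\<Sum>x\<in>E. real (r x)) \<ge> real (k + 1) * real (card E)"
        using rsum by (simp add: algebra_simps)
      then have "((2 * real (k + 1) - 1) * real (card E) - (\<Sum>x\<in>E. real (r x))) / real (k + 1) ^ 2
          \<ge> real (k + 1) * real (card E) / real (k + 1) ^ 2"
        by (intro divide_right_mono) auto
      also have "real (k + 1) * real (card E) / real (k + 1) ^ 2 = real (card E) / real (k + 1)"
        by (simp add: power2_eq_square)
      finally show ?thesis .
    qed
    ultimately have big: "real (card E) / real (k + 1) \<le> real (card I)"
      using I(3) unfolding r_def by linarith
    have codeg: "real (codegA I u u') \<le> T" if "u \<in> A" "u' \<in> A" "u \<noteq> u'" for u u'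
    proof (cases "heavy u u'")
      case True
      have "{b. (u, b) \<in> I \<and> (u', b) \<in> I} = {}"
      proof (rule ccontr)
        assume "{b. (u, b) \<in> I \<and> (u', b) \<in> I} \<noteq> {}"
        then obtain b where b: "(u, b) \<in> I" "(u', b) \<in> I" by auto
        have "adj (u, b) (u', b)" using True by (simp add: adj_def)
        with I(2) b show False by blast
      qed
      then have "codegA I u u' = 0" by (simp only: codegA_def card.empty)
      then show ?thesis using T0 by simp
    next
      case False
      have "codegA I u u' \<le> codegA E u u'" unfolding codegA_def
        by (rule card_mono) (use finN[of u] I(1) in \<open>auto simp: N_def intro: finite_subset\<close>)
      then show ?thesis using False that by (simp add: heavy_def)
    qed
    show ?thesis using I(1) big codeg by (auto simp: T_def)
  qed
qed

end
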